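(* The map $T\colon\mathcal{I}_\alpha\to\mathbb{T}$ defined by $T(\beta)=([0,\mathscr{D}_\beta(\infty)],d,M(\beta))$, where $d$ is the Euclidean metric restricted to $[0,\mathscr{D}_\beta(\infty)]$ and $M(\beta)=\sum_{U\in\beta}\mathrm{Leb}(U)\,\delta_{\mathscr{D}_\beta(U)}$, is continuous from $(\mathcal{I}_\alpha,d_\alpha)$ to $\mathbb{T}$.
   Context: Fix $\alpha\in(0,1)$. $\mathbb{T}$ denotes the space of isometry classes of compact rooted weighted $\mathbb{R}$-trees (rooted compact real trees equipped with a finite Borel measure), equipped with the Gromov--Hausdorff--Prokhorov metric; the segment $[0,\mathscr{D}_\beta(\infty)]$ is rooted at $0$. An interval partition is a set $\beta$ of disjoint open subintervals (blocks) of some interval $[0,L]$ that cover $[0,L]$ up to a Lebesgue-null set; write $\|\beta\|:=L$ and $\mathrm{Leb}(U)$ for the length of a block $U$. A partition $\beta$ has the $\alpha$-diversity property if for every $t\in[0,\|\beta\|]$ the limit $\mathscr{D}_\beta(t):=\Gamma(1-\alpha)\lim_{h\downarrow0}h^\alpha\#\{(a,b)\in\beta\colon b-a>h,\ b\le t\}$ exists; $\mathcal{I}_\alpha$ is the set of such partitions. For $U\in\beta$, $\mathscr{D}_\beta(U):=\mathscr{D}_\beta(t)$ for any $t\in U$, and $\mathscr{D}_\beta(\infty):=\mathscr{D}_\beta(\|\beta\|)$. A correspondence between $\beta,\gamma\in\mathcal{I}_\alpha$ is a finite sequence $(U_j,V_j)_{j\in[n]}$, $n\ge0$, of pairs in $\beta\times\gamma$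 with $(U_j)_j$ and $(V_j)_j$ each strictly increasing in left-to-right order. Its $\alpha$-distortion is the maximum of (i) $\sum_{j}|\mathrm{Leb}(U_j)-\mathrm{Leb}(V_j)|+\|\beta\|-\sum_j\mathrm{Leb}(U_j)$, (ii) $\sum_{j}|\mathrm{Leb}(U_j)-\mathrm{Leb}(V_j)|+\|\gamma\|-\sum_j\mathrm{Leb}(V_j)$, (iii) $\sup_{j}|\mathscr{D}_\beta(U_j)-\mathscr{D}_\gamma(V_j)|$, (iv) $|\mathscr{D}_\beta(\infty)-\mathscr{D}_\gamma(\infty)|$. $d_\alpha(\beta,\gamma)$ is the infimum of the $\alpha$-distortion over all correspondences. *)

theory Defs
  imports "HOL-Analysis.Analysis"
begin

text \<open>A block (a,b) is represented by the pair of its endpoints; an interval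
partition is a set of such pairs.\<close>

type_synonym ipart = "(real \<times> real) set"

definition block :: "real \<times> real \<Rightarrow> real set" where
  "block U = {fst U <..< snd U}"

definition Leb :: "real \<times> real \<Rightarrow> real" where
  "Leb U = snd U - fst U"

definition ip_mass :: "ipart \<Rightarrow> real" where
  "ip_mass \<beta> = Sup (insert 0 (snd ` \<beta>))"

definition is_ipart :: "ipart \<Rightarrow> bool" where
  "is_ipart \<beta> \<longleftrightarrow>
     (\<forall>U\<in>\<beta>. 0 \<le> fst U \<and> fst U < snd U) \<and>
     bdd_above (snd ` \<beta>) \<and>
     disjoint_family_on block \<beta> \<and>
     emeasure lebesgue ({0..ip_mass \<beta>} - (\<Union>U\<in>\<beta>. block U)) = 0"

definition count_gt :: "ipart \<Rightarrow> real \<Rightarrow> real \<Rightarrow> real" where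
  "count_gt \<beta> h t = real (card {U\<in>\<beta>. Leb U > h \<and> snd U \<le> t})"

definition has_diversity :: "real \<Rightarrow> ipart \<Rightarrow> bool" where
  "has_diversity \<alpha> \<beta> \<longleftrightarrow>
     (\<forall>t\<in>{0..ip_mass \<beta>}. \<exists>l. ((\<lambda>h. h powr \<alpha> * count_gt \<beta> h t) \<longlongrightarrow> l) (at_right 0))"

definition I_alpha :: "real \<Rightarrow> ipart set" where
  "I_alpha \<alpha> = {\<beta>. is_ipart \<beta> \<and> has_diversity \<alpha> \<beta>}"

definition div_at :: "real \<Rightarrow> ipart \<Rightarrow> real \<Rightarrow> real" where
  "div_at \<alpha> \<beta> t = Gamma (1 - \<alpha>) * Lim (at_right 0) (\<lambda>h. h powr \<alpha> * count_gt \<beta> h t)"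

text \<open>Diversity of a block: value at any point of the block (here its midpoint).\<close>
definition div_block :: "real \<Rightarrow> ipart \<Rightarrow> real \<times> real \<Rightarrow> real" where
  "div_block \<alpha> \<beta> U = div_at \<alpha> \<beta> ((fst U + snd U) / 2)"

definition div_inf :: "real \<Rightarrow> ipart \<Rightarrow> real" where
  "div_inf \<alpha> \<beta> = div_at \<alpha> \<beta> (ip_mass \<beta>)"

definition is_correspondence :: "ipart \<Rightarrow> ipart \<Rightarrow> ((real \<times> real) \<times> (real \<times> real)) list \<Rightarrow> bool" where
  "is_correspondence \<beta> \<gamma> C \<longleftrightarrow>
     (\<forall>p\<in>set C. fst p \<in> \<beta> \<and> snd p \<in> \<gamma>) \<and>
     sorted_wrt (\<lambda>p q. fst (fst p) < fst (fst q)) C \<and>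
     sorted_wrt (\<lambda>p q. fst (snd p) < fst (snd q)) C"

definition distortion :: "real \<Rightarrow> ipart \<Rightarrow> ipart \<Rightarrow> ((real \<times> real) \<times> (real \<times> real)) list \<Rightarrow> real" where
  "distortion \<alpha> \<beta> \<gamma> C =
     (let S = (\<Sum>p\<leftarrow>C. \<bar>Leb (fst p) - Leb (snd p)\<bar>) in
      Max {S + ip_mass \<beta> - (\<Sum>p\<leftarrow>C. Leb (fst p)),
           S + ip_mass \<gamma> - (\<Sum>p\<leftarrow>C. Leb (snd p)),
           Sup (insert 0 ((\<lambda>p. \<bar>div_block \<alpha> \<beta> (fst p) - div_block \<alpha> \<gamma> (snd p)\<bar>) ` set C)),
           \<bar>div_inf \<alpha> \<beta> - div_inf \<alpha> \<gamma>\<bar>})"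

definition d_alpha :: "real \<Rightarrow> ipart \<Rightarrow> ipart \<Rightarrow> real" where
  "d_alpha \<alpha> \<beta> \<gamma> = Inf {distortion \<alpha> \<beta> \<gamma> C | C. is_correspondence \<beta> \<gamma> C}"

text \<open>Rooted weighted compact subsets (X, r, mu) of the real line with the Euclidean
metric; mu is a finite measure given as a set function on all subsets (the measures
used below are countable sums of point masses).  Embeddings of two spaces into a common
metric space are represented, as usual, by pseudometrics on the disjoint union that
restrict to the given metrics.\<close>

definition admissible :: "real set \<Rightarrow> real set \<Rightarrow> (real + real \<Rightarrow> real + real \<Rightarrow> real) \<Rightarrow> bool" where
  "admissible X Y \<delta> \<longleftrightarrow>
     (let Z = Inl ` X \<union> Inr ` Y in
       (\<forall>z\<in>Z. \<delta> z z = 0) \<and>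
       (\<forall>z\<in>Z. \<forall>w\<in>Z. \<delta> z w = \<delta> w z \<and> 0 \<le> \<delta> z w) \<and>
       (\<forall>z\<in>Z. \<forall>w\<in>Z. \<forall>v\<in>Z. \<delta> z v \<le> \<delta> z w + \<delta> w v) \<and>
       (\<forall>x\<in>X. \<forall>x'\<in>X. \<delta> (Inl x) (Inl x') = dist x x') \<and>
       (\<forall>y\<in>Y. \<forall>y'\<in>Y. \<delta> (Inr y) (Inr y') = dist y y'))"

definition hausdorff_in :: "('z \<Rightarrow> 'z \<Rightarrow> real) \<Rightarrow> 'z set \<Rightarrow> 'z set \<Rightarrow> real" where
  "hausdorff_in \<delta> A B = Inf {e. e > 0 \<and> (\<forall>a\<in>A. \<exists>b\<in>B. \<delta> a b \<le> e) \<and> (\<forall>b\<in>B. \<exists>a\<in>A. \<delta> b a \<le> e)}"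

definition eps_nbhd :: "('z \<Rightarrow> 'z \<Rightarrow> real) \<Rightarrow> 'z set \<Rightarrow> 'z set \<Rightarrow> real \<Rightarrow> 'z set" where
  "eps_nbhd \<delta> Z F e = {z\<in>Z. \<exists>f\<in>F. \<delta> z f < e}"

definition prokhorov_in :: "('z \<Rightarrow> 'z \<Rightarrow> real) \<Rightarrow> 'z set \<Rightarrow> ('z set \<Rightarrow> real) \<Rightarrow> ('z set \<Rightarrow> real) \<Rightarrow> real" where
  "prokhorov_in \<delta> Z \<mu> \<nu> = Inf {e. e > 0 \<and> (\<forall>F\<subseteq>Z.
        \<mu> F \<le> \<nu> (eps_nbhd \<delta> Z F e) + e \<and> \<nu> F \<le> \<mu> (eps_nbhd \<delta> Z F e) + e)}"

definition ghp :: "real set \<Rightarrow> real \<Rightarrow> (real set \<Rightarrow> real) \<Rightarrow> real set \<Rightarrow> real \<Rightarrow> (real set \<Rightarrow> real) \<Rightarrow> real" where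
  "ghp X r \<mu> Y s \<nu> = Inf {max (\<delta> (Inl r) (Inr s))
        (max (hausdorff_in \<delta> (Inl ` X) (Inr ` Y))
             (prokhorov_in \<delta> (Inl ` X \<union> Inr ` Y) (\<lambda>F. \<mu> (Inl -` F)) (\<lambda>F. \<nu> (Inr -` F)))) | \<delta>.
        admissible X Y \<delta>}"

definition M_meas :: "real \<Rightarrow> ipart \<Rightarrow> real set \<Rightarrow> real" where
  "M_meas \<alpha> \<beta> A = infsum Leb {U\<in>\<beta>. div_block \<alpha> \<beta> U \<in> A}"

definition dist_T :: "real \<Rightarrow> ipart \<Rightarrow> ipart \<Rightarrow> real" where
  "dist_T \<alpha> \<beta> \<gamma> = ghp {0..div_inf \<alpha> \<beta>} 0 (M_meas \<alpha> \<beta>) {0..div_inf \<alpha> \<gamma>} 0 (M_meas \<alpha> \<gamma>)"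

end

theory Submission
  imports Defs
begin


lemma ip_basic:
  assumes "is_ipart \<beta>" "U \<in> \<beta>"
  shows "0 \<le> fst U" "fst U < snd U" "snd U \<le> ip_mass \<beta>" "0 \<le> Leb U"
proof -
  show "0 \<le> fst U" "fst U < snd U" using assms unfolding is_ipart_def by auto
  then show "0 \<le> Leb U" unfolding Leb_def by simp
  have "bdd_above (snd ` \<beta>)" using assms unfolding is_ipart_def by auto
  then have "bdd_above (insert 0 (snd ` \<beta>))" by simp
  then show "snd U \<le> ip_mass \<beta>" unfolding ip_mass_def
    by (meson assms(2) cSup_upper image_eqI insertCI)
qed

lemma ip_mass_nonneg: "0 \<le> ip_mass \<beta>" if "is_ipart \<beta>"
proof -
  have "bdd_above (snd ` \<beta>)" using that unfolding is_ipart_def by auto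
  then have "bdd_above (insert 0 (snd ` \<beta>))" by simp
  then show ?thesis unfolding ip_mass_def by (meson cSup_upper insertCI)
qed

lemma finite_sum_le:
  assumes ip: "is_ipart \<beta>" and F: "finite F" "F \<subseteq> \<beta>"
  shows "sum Leb F \<le> ip_mass \<beta>"
proof -
  have disj: "disjoint_family_on block F"
    using ip F unfolding is_ipart_def disjoint_family_on_def by blast
  have "(\<Sum>U\<in>F. emeasure lborel (block U)) = emeasure lborel (\<Union>U\<in>F. block U)"
    proof (rule sum_emeasure[OF _ disj F(1)])
    show "block ` F \<subseteq> sets lborel" by (auto simp: block_def)
  qed
  also have "\<dots> \<le> emeasure lborel {0..ip_mass \<beta>}"
  proof (rule emeasure_mono)
    show "(\<Union>U\<in>F. block U) \<subseteq> {0..ip_mass \<beta>}"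
      using ip_basic[OF ip] F unfolding block_def
      by (auto; meson less_imp_le order_trans subsetD)
  qed auto
  also have "\<dots> = ennreal (ip_mass \<beta>)" using ip_mass_nonneg[OF ip] by simp
  finally have "(\<Sum>U\<in>F. ennreal (Leb U)) \<le> ennreal (ip_mass \<beta>)"
    using ip_basic[OF ip] F by (simp add: block_def Leb_def subset_eq)
  then have "ennreal (sum Leb F) \<le> ennreal (ip_mass \<beta>)"
    using ip_basic[OF ip] F by (subst sum_ennreal[symmetric]) (auto)
  then show ?thesis using ip_mass_nonneg[OF ip] by (simp add: ennreal_le_iff)
qed

lemma Leb_summable:
  assumes ip: "is_ipart \<beta>" and S: "S \<subseteq> \<beta>"
  shows "Leb summable_on S"
proof (rule nonneg_bdd_above_summable_on)
  show "\<And>x. x \<in> S \<Longrightarrow> 0 \<le> Leb x" using ip_basic[OF ip] S by auto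
  show "bdd_above (sum Leb ` {F. F \<subseteq> S \<and> finite F})"
    using finite_sum_le[OF ip] S by (intro bdd_aboveI[where M="ip_mass \<beta>"]) auto
qed

lemma Leb_infsum_le:
  assumes ip: "is_ipart \<beta>"
  shows "infsum Leb \<beta> \<le> ip_mass \<beta>"
  by (rule infsum_le_finite_sums[OF Leb_summable[OF ip order_refl]]) (use finite_sum_le[OF ip] in auto)

lemma finite_long:
  assumes ip: "is_ipart \<beta>" and h: "h > 0"
  shows "finite {U\<in>\<beta>. Leb U > h}"
proof (rule ccontr)
  assume inf: "infinite {U\<in>\<beta>. Leb U > h}"
  obtain n :: nat where n: "real n > ip_mass \<beta> / h" using reals_Archimedean2 by blast
  obtain F where F: "F \<subseteq> {U\<in>\<beta>. Leb U > h}" "finite F" "card F = n"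
    using infinite_arbitrarily_large[OF inf] by blast
  have "real n * h \<le> sum Leb F"
  proof -
    have "sum (\<lambda>_. h) F \<le> sum Leb F" using F(1) by (intro sum_mono) auto
    then show ?thesis using F(3) by simp
  qed
  moreover have "sum Leb F \<le> ip_mass \<beta>" using finite_sum_le[OF ip F(2)] F(1) by auto
  moreover have "ip_mass \<beta> < real n * h" using n h by (simp add: field_simps)
  ultimately show False by linarith
qed



lemma div_at_lim:
  assumes "\<beta> \<in> I_alpha \<alpha>" "t \<in> {0..ip_mass \<beta>}"
  obtains l where "((\<lambda>h. h powr \<alpha> * count_gt \<beta> h t) \<longlongrightarrow> l) (at_right 0)"
     "div_at \<alpha> \<beta> t = Gamma (1 - \<alpha>) * l"
proof -
  obtain l where l: "((\<lambda>h. h powr \<alpha> * count_gt \<beta> h t) \<longlongrightarrow> l) (at_right 0)"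
    using assms unfolding I_alpha_def has_diversity_def by blast
  then have "Lim (at_right 0) (\<lambda>h. h powr \<alpha> * count_gt \<beta> h t) = l"
    by (intro tendsto_Lim) auto
  then show ?thesis using that l unfolding div_at_def by auto
qed

lemma div_at_mono:
  assumes b: "\<beta> \<in> I_alpha \<alpha>" and a: "\<alpha> < 1"
    and t: "0 \<le> t" "t \<le> t'" "t' \<le> ip_mass \<beta>"
  shows "0 \<le> div_at \<alpha> \<beta> t" "div_at \<alpha> \<beta> t \<le> div_at \<alpha> \<beta> t'"
proof -
  have ip: "is_ipart \<beta>" using b unfolding I_alpha_def by auto
  obtain l where l: "((\<lambda>h. h powr \<alpha> * count_gt \<beta> h t) \<longlongrightarrow> l) (at_right 0)"
     "div_at \<alpha> \<beta> t = Gamma (1 - \<alpha>) * l"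
    using div_at_lim[OF b, of t] t by auto
  obtain l' where l': "((\<lambda>h. h powr \<alpha> * count_gt \<beta> h t') \<longlongrightarrow> l') (at_right 0)"
     "div_at \<alpha> \<beta> t' = Gamma (1 - \<alpha>) * l'"
    using div_at_lim[OF b, of t'] t by auto
  have G: "Gamma (1 - \<alpha>) > 0" using a by (intro Gamma_real_pos) simp
  have "0 \<le> l"
    by (rule tendsto_le[OF _ l(1) tendsto_const]) (auto simp: count_gt_def)
  then show "0 \<le> div_at \<alpha> \<beta> t" using l(2) G by simp
  have ev: "eventually (\<lambda>h. h > (0::real)) (at_right 0)"
    by (simp add: eventually_at_right_less)
  have "eventually (\<lambda>h. h powr \<alpha> * count_gt \<beta> h t \<le> h powr \<alpha> * count_gt \<beta> h t') (at_right 0)"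
  proof (rule eventually_mono[OF ev])
    fix h :: real assume h: "h > 0"
    have "card {U\<in>\<beta>. Leb U > h \<and> snd U \<le> t} \<le> card {U\<in>\<beta>. Leb U > h \<and> snd U \<le> t'}"
      by (rule card_mono, rule finite_subset[OF _ finite_long[OF ip h]]) (use t in auto)
    then show "h powr \<alpha> * count_gt \<beta> h t \<le> h powr \<alpha> * count_gt \<beta> h t'"
      unfolding count_gt_def by (intro mult_left_mono) auto
  qed
  then have "l \<le> l'" by (rule tendsto_le[OF _ l'(1) l(1), rotated]) simp
  then show "div_at \<alpha> \<beta> t \<le> div_at \<alpha> \<beta> t'" using l(2) l'(2) G by simp
qed

lemma div_block_bounds:
  assumes b: "\<beta> \<in> I_alpha \<alpha>" and a: "\<alpha> < 1" and U: "U \<in> \<beta>"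
  shows "0 \<le> div_block \<alpha> \<beta> U" "div_block \<alpha> \<beta> U \<le> div_inf \<alpha> \<beta>" "0 \<le> div_inf \<alpha> \<beta>"
proof -
  have ip: "is_ipart \<beta>" using b unfolding I_alpha_def by auto
  note u = ip_basic[OF ip U]
  have t: "0 \<le> (fst U + snd U)/2" "(fst U + snd U)/2 \<le> ip_mass \<beta>" using u by auto
  show "0 \<le> div_block \<alpha> \<beta> U" "div_block \<alpha> \<beta> U \<le> div_inf \<alpha> \<beta>"
    unfolding div_block_def div_inf_def using div_at_mono[OF b a t(1) t(2) order_refl] by auto
qed (use div_at_mono[OF assms(1,2) ip_mass_nonneg order_refl order_refl] assms(1)
      in \<open>auto simp: div_inf_def I_alpha_def\<close>)



lemma mass_bound:
  assumes ipb: "is_ipart \<beta>" and ipg: "is_ipart \<gamma>"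
    and CS: "set C \<subseteq> \<beta> \<times> \<gamma>" and d1: "distinct (map fst C)" and d2: "distinct (map snd C)"
    and AB: "\<forall>p\<in>set C. f (fst p) \<in> A \<longrightarrow> g (snd p) \<in> B"
  shows "infsum Leb {U\<in>\<beta>. f U \<in> A} \<le> infsum Leb {V\<in>\<gamma>. g V \<in> B}
     + ((\<Sum>p\<leftarrow>C. \<bar>Leb (fst p) - Leb (snd p)\<bar>) + ip_mass \<beta> - (\<Sum>p\<leftarrow>C. Leb (fst p)))"
proof -
  define SA where "SA = {U\<in>\<beta>. f U \<in> A}"
  define T where "T = {V\<in>\<gamma>. g V \<in> B}"
  define CU where "CU = fst ` set C"
  define P where "P = {p\<in>set C. fst p \<in> SA}"
  have dC: "distinct C" using d1 by (simp add: distinct_map)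
  have if1: "inj_on fst (set C)" using d1 by (simp add: distinct_map)
  have if2: "inj_on snd (set C)" using d2 by (simp add: distinct_map)
  have sl: "\<And>h. sum_list (map h C) = sum h (set C)" using dC by (simp add: sum_list_distinct_conv_sum_set)
  have CUb: "CU \<subseteq> \<beta>" using CS unfolding CU_def by auto
  have finP: "finite P" unfolding P_def by simp
  have PC: "P \<subseteq> set C" unfolding P_def by auto
  have fPCU: "fst ` P \<subseteq> CU" unfolding P_def CU_def by auto
  have nb: "\<And>U. U \<in> \<beta> \<Longrightarrow> 0 \<le> Leb U" using ip_basic[OF ipb] by auto
  have ng: "\<And>U. U \<in> \<gamma> \<Longrightarrow> 0 \<le> Leb U" using ip_basic[OF ipg] by auto
  have s1: "infsum Leb SA \<le> infsum Leb (fst ` P \<union> (\<beta> - CU))"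
  proof (rule infsum_mono_neutral)
    show "Leb summable_on SA" by (rule Leb_summable[OF ipb]) (auto simp: SA_def)
    show "Leb summable_on (fst ` P \<union> (\<beta> - CU))" by (rule Leb_summable[OF ipb]) (use fPCU CUb in auto)
    show "\<And>x. x \<in> SA - (fst ` P \<union> (\<beta> - CU)) \<Longrightarrow> Leb x \<le> 0"
    proof -
      fix x assume x: "x \<in> SA - (fst ` P \<union> (\<beta> - CU))"
      then obtain p where "p \<in> set C" "x = fst p" unfolding CU_def SA_def by auto
      then have "x \<in> fst ` P" using x unfolding P_def by auto
      then show "Leb x \<le> 0" using x by blast
    qed
    show "\<And>x. x \<in> (fst ` P \<union> (\<beta> - CU)) - SA \<Longrightarrow> 0 \<le> Leb x"
      using fPCU CUb nb by blast
  qed auto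
  also have "\<dots> = infsum Leb (fst ` P) + infsum Leb (\<beta> - CU)"
    by (rule infsum_Un_disjoint) (use finP fPCU in \<open>auto intro: Leb_summable[OF ipb]\<close>)
  finally have s2: "infsum Leb SA \<le> sum Leb (fst ` P) + infsum Leb (\<beta> - CU)" using finP by simp
  have "infsum Leb \<beta> = infsum Leb (CU \<union> (\<beta> - CU))" using CUb by (simp add: Un_absorb1)
  also have "\<dots> = infsum Leb CU + infsum Leb (\<beta> - CU)"
    by (rule infsum_Un_disjoint) (use CUb in \<open>auto intro: Leb_summable[OF ipb] simp: CU_def\<close>)
  also have "infsum Leb CU = sum Leb CU" by (simp add: CU_def)
  finally have s3: "infsum Leb (\<beta> - CU) \<le> ip_mass \<beta> - sum Leb CU"
    using Leb_infsum_le[OF ipb] by simp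
  have s4: "sum Leb CU = (\<Sum>p\<leftarrow>C. Leb (fst p))"
    unfolding CU_def sl by (simp add: sum.reindex[OF if1])
  have "sum Leb (fst ` P) = sum (\<lambda>p. Leb (fst p)) P"
    using inj_on_subset[OF if1 PC] by (simp add: sum.reindex)
  also have "\<dots> \<le> sum (\<lambda>p. Leb (snd p) + \<bar>Leb (fst p) - Leb (snd p)\<bar>) P"
    by (intro sum_mono) auto
  also have "\<dots> = sum (\<lambda>p. Leb (snd p)) P + sum (\<lambda>p. \<bar>Leb (fst p) - Leb (snd p)\<bar>) P"
    by (simp add: sum.distrib)
  also have "sum (\<lambda>p. \<bar>Leb (fst p) - Leb (snd p)\<bar>) P \<le> sum (\<lambda>p. \<bar>Leb (fst p) - Leb (snd p)\<bar>) (set C)"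
    by (rule sum_mono2) (use PC in auto)
  also have "sum (\<lambda>p. Leb (snd p)) P = sum Leb (snd ` P)"
    using inj_on_subset[OF if2 PC] by (simp add: sum.reindex)
  also have "sum Leb (snd ` P) = infsum Leb (snd ` P)" using finP by simp
  also have "infsum Leb (snd ` P) \<le> infsum Leb T"
  proof (rule infsum_mono_neutral)
    show "Leb summable_on (snd ` P)" using finP by simp
    show "Leb summable_on T" by (rule Leb_summable[OF ipg]) (auto simp: T_def)
    show "\<And>x. x \<in> snd ` P - T \<Longrightarrow> Leb x \<le> 0"
      using AB CS unfolding P_def T_def SA_def by auto
    show "\<And>x. x \<in> T - snd ` P \<Longrightarrow> 0 \<le> Leb x" using ng unfolding T_def by auto
  qed auto
  finally have s5: "sum Leb (fst ` P) \<le> infsum Leb T + (\<Sum>p\<leftarrow>C. \<bar>Leb (fst p) - Leb (snd p)\<bar>)"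
    unfolding sl by simp
  show ?thesis using s2 s3 s4 s5 unfolding SA_def[symmetric] T_def[symmetric] by linarith
qed



lemma sorted_distinct_map:
  "sorted_wrt (\<lambda>p q. h p < (h q::real)) xs \<Longrightarrow> distinct (map h xs)"
proof (induction xs)
  case (Cons x xs)
  then have "h x \<notin> h ` set xs" by fastforce
  then show ?case using Cons by simp
qed simp

lemma corr_distinct:
  assumes "is_correspondence \<beta> \<gamma> C"
  shows "distinct (map fst C)" "distinct (map snd C)" "set C \<subseteq> \<beta> \<times> \<gamma>"
proof -
  have "distinct (map (\<lambda>p. fst (fst p)) C)" "distinct (map (\<lambda>p. fst (snd p)) C)"
    using assms unfolding is_correspondence_def by (auto intro: sorted_distinct_map)
  then show "distinct (map fst C)" "distinct (map snd C)"
    by (simp_all add: distinct_map inj_on_def)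
  show "set C \<subseteq> \<beta> \<times> \<gamma>" using assms unfolding is_correspondence_def by (auto simp: mem_Times_iff)
qed

definition dl :: "real + real \<Rightarrow> real + real \<Rightarrow> real" where
  "dl z w = \<bar>case_sum id id z - case_sum id id w\<bar>"

lemma dl_simps[simp]: "dl (Inl x) (Inl y) = \<bar>x - y\<bar>" "dl (Inr x) (Inr y) = \<bar>x - y\<bar>"
  "dl (Inl x) (Inr y) = \<bar>x - y\<bar>" "dl (Inr x) (Inl y) = \<bar>x - y\<bar>"
  by (auto simp: dl_def)

lemma dl_tri: "dl z v \<le> dl z w + dl w v"
proof -
  have "\<And>a b c::real. \<bar>a - c\<bar> \<le> \<bar>a - b\<bar> + \<bar>b - c\<bar>" by linarith
  then show ?thesis unfolding dl_def by blast
qed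

lemma dl_adm: "admissible X Y dl"
proof -
  have "\<forall>z. dl z z = 0" "\<forall>z w. dl z w = dl w z \<and> 0 \<le> dl z w"
    by (auto simp: dl_def abs_minus_commute)
  then show ?thesis unfolding admissible_def Let_def
    by (intro conjI; (blast intro: dl_tri)?; simp add: dist_real_def)
qed


lemma haus_aux: "0 \<le> x \<Longrightarrow> x \<le> a \<Longrightarrow> 0 \<le> (b::real) \<Longrightarrow> \<bar>a - b\<bar> < e \<Longrightarrow> min x b \<in> {0..b} \<and> \<bar>x - min x b\<bar> \<le> e"
  by (auto simp: min_def)

lemma haus_side:
  assumes "0 \<le> a" "0 \<le> b" "\<bar>a - b\<bar> < e"
  shows "\<forall>z\<in>Inl ` {0..a}. \<exists>w\<in>Inr ` {0..b}. dl z w \<le> e"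
        "\<forall>z\<in>Inr ` {0..b}. \<exists>w\<in>Inl ` {0..a}. dl z w \<le> e"
proof -
  show "\<forall>z\<in>Inl ` {0..a}. \<exists>w\<in>Inr ` {0..b}. dl z w \<le> e"
  proof
    fix z :: "real + real" assume "z \<in> Inl ` {0..a}"
    then obtain x where x: "z = Inl x" "0 \<le> x" "x \<le> a" by auto
    have "min x b \<in> {0..b} \<and> \<bar>x - min x b\<bar> \<le> e" using haus_aux[OF x(2,3) assms(2,3)] .
    then show "\<exists>w\<in>Inr ` {0..b}. dl z w \<le> e" using x(1) by (intro bexI[of _ "Inr (min x b)"]) auto
  qed
  have e': "\<bar>b - a\<bar> < e" using assms(3) by (simp add: abs_minus_commute)
  show "\<forall>z\<in>Inr ` {0..b}. \<exists>w\<in>Inl ` {0..a}. dl z w \<le> e"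
  proof
    fix z :: "real + real" assume "z \<in> Inr ` {0..b}"
    then obtain x where x: "z = Inr x" "0 \<le> x" "x \<le> b" by auto
    have "min x a \<in> {0..a} \<and> \<bar>x - min x a\<bar> \<le> e" using haus_aux[OF x(2,3) assms(1) e'] .
    then show "\<exists>w\<in>Inl ` {0..a}. dl z w \<le> e" using x(1) by (intro bexI[of _ "Inl (min x a)"]) auto
  qed
qed


lemma div_inf_nonneg:
  assumes b: "\<beta> \<in> I_alpha \<alpha>" and a: "\<alpha> < 1"
  shows "0 \<le> div_inf \<alpha> \<beta>"
proof -
  have ip: "is_ipart \<beta>" using b by (auto simp: I_alpha_def)
  show ?thesis unfolding div_inf_def
    by (rule div_at_mono(1)[OF b a ip_mass_nonneg[OF ip] order_refl order_refl])
qed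

theorem corollary2p5:
  fixes \<alpha> :: real
  assumes "0 < \<alpha>" and "\<alpha> < 1"
  shows "\<forall>\<beta>\<in>I_alpha \<alpha>. \<forall>\<epsilon>>0. \<exists>\<delta>>0. \<forall>\<gamma>\<in>I_alpha \<alpha>.
           d_alpha \<alpha> \<beta> \<gamma> < \<delta> \<longrightarrow> dist_T \<alpha> \<beta> \<gamma> < \<epsilon>"
proof (intro ballI allI impI)
  fix \<beta> :: "ipart" and \<epsilon> :: real
  assume b: "\<beta> \<in> I_alpha \<alpha>" and \<epsilon>: "\<epsilon> > 0"
  show "\<exists>\<delta>>0. \<forall>\<gamma>\<in>I_alpha \<alpha>. d_alpha \<alpha> \<beta> \<gamma> < \<delta> \<longrightarrow> dist_T \<alpha> \<beta> \<gamma> < \<epsilon>"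
  proof (intro exI[of _ "\<epsilon>/2"] conjI ballI impI)
    show "\<epsilon>/2 > 0" using \<epsilon> by simp
    fix \<gamma> assume g: "\<gamma> \<in> I_alpha \<alpha>" and d: "d_alpha \<alpha> \<beta> \<gamma> < \<epsilon>/2"
    define e where "e = \<epsilon>/2"
    have e0: "e > 0" using \<epsilon> by (simp add: e_def)
    have ipb: "is_ipart \<beta>" and ipg: "is_ipart \<gamma>" using b g by (auto simp: I_alpha_def)
    have "is_correspondence \<beta> \<gamma> []" by (simp add: is_correspondence_def)
    then obtain C where corr: "is_correspondence \<beta> \<gamma> C" and dC: "distortion \<alpha> \<beta> \<gamma> C < e"
      using cInf_lessD[of "{distortion \<alpha> \<beta> \<gamma> C | C. is_correspondence \<beta> \<gamma> C}" e] d
      unfolding d_alpha_def e_def by blast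
    note cd = corr_distinct[OF corr]
    define S where "S = (\<Sum>p\<leftarrow>C. \<bar>Leb (fst p) - Leb (snd p)\<bar>)"
    define DS where "DS = Sup (insert 0 ((\<lambda>p. \<bar>div_block \<alpha> \<beta> (fst p) - div_block \<alpha> \<gamma> (snd p)\<bar>) ` set C))"
    have c1: "S + ip_mass \<beta> - (\<Sum>p\<leftarrow>C. Leb (fst p)) < e"
     and c2: "S + ip_mass \<gamma> - (\<Sum>p\<leftarrow>C. Leb (snd p)) < e"
     and c3: "DS < e"
     and c4: "\<bar>div_inf \<alpha> \<beta> - div_inf \<alpha> \<gamma>\<bar> < e"
    proof -
      define a1 where "a1 = S + ip_mass \<beta> - (\<Sum>p\<leftarrow>C. Leb (fst p))"
      define a2 where "a2 = S + ip_mass \<gamma> - (\<Sum>p\<leftarrow>C. Leb (snd p))"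
      define a4 where "a4 = \<bar>div_inf \<alpha> \<beta> - div_inf \<alpha> \<gamma>\<bar>"
      have "Max {a1, a2, DS, a4} < e" using dC unfolding distortion_def Let_def a1_def a2_def a4_def S_def DS_def .
      then have "\<forall>x\<in>{a1, a2, DS, a4}. x < e" by (subst (asm) Max_less_iff) auto
      then show "a1 < e" "a2 < e" "DS < e" "a4 < e" by auto
    qed
    have dsp: "\<bar>div_block \<alpha> \<beta> (fst p) - div_block \<alpha> \<gamma> (snd p)\<bar> < e" if "p \<in> set C" for p
    proof -
      have "\<bar>div_block \<alpha> \<beta> (fst p) - div_block \<alpha> \<gamma> (snd p)\<bar> \<le> DS"
        unfolding DS_def by (rule cSup_upper) (use that in auto)
      then show ?thesis using c3 by simp
    qed
    define Db where "Db = div_inf \<alpha> \<beta>"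
    define Dg where "Dg = div_inf \<alpha> \<gamma>"
    note bb = div_block_bounds[OF b assms(2)]
    note bg = div_block_bounds[OF g assms(2)]
    have Db0: "0 \<le> Db" and Dg0: "0 \<le> Dg"
      using div_inf_nonneg[OF b assms(2)] div_inf_nonneg[OF g assms(2)]
      unfolding Db_def Dg_def by auto
    define X where "X = {0..Db}"
    define Y where "Y = {0..Dg}"
    define Z where "Z = Inl ` X \<union> Inr ` Y"
    have X0: "0 \<in> X" and Y0: "0 \<in> Y" using Db0 Dg0 by (auto simp: X_def Y_def)
    have H: "hausdorff_in dl (Inl ` X) (Inr ` Y) \<le> e"
      unfolding hausdorff_in_def
    proof (rule cInf_lower)
      show "bdd_below {e. e > 0 \<and> (\<forall>a\<in>Inl ` X. \<exists>b\<in>Inr ` Y. dl a b \<le> e) \<and> (\<forall>b\<in>Inr ` Y. \<exists>a\<in>Inl ` X. dl b a \<le> e)}"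
        by (rule bdd_belowI[where m=0]) (blast intro: less_imp_le)
      have c4': "\<bar>Db - Dg\<bar> < e" using c4 by (simp add: Db_def Dg_def)
      note hs = haus_side[OF Db0 Dg0 c4']
      show "e \<in> {e. e > 0 \<and> (\<forall>a\<in>Inl ` X. \<exists>b\<in>Inr ` Y. dl a b \<le> e) \<and> (\<forall>b\<in>Inr ` Y. \<exists>a\<in>Inl ` X. dl b a \<le> e)}"
        using hs e0 unfolding X_def Y_def mem_Collect_eq by blast
    qed
    have P: "prokhorov_in dl Z (\<lambda>F. M_meas \<alpha> \<beta> (Inl -` F)) (\<lambda>F. M_meas \<alpha> \<gamma> (Inr -` F)) \<le> e"
      unfolding prokhorov_in_def
    proof (rule cInf_lower)
      show "bdd_below {e. e > 0 \<and> (\<forall>F\<subseteq>Z.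
        M_meas \<alpha> \<beta> (Inl -` F) \<le> M_meas \<alpha> \<gamma> (Inr -` (eps_nbhd dl Z F e)) + e \<and>
        M_meas \<alpha> \<gamma> (Inr -` F) \<le> M_meas \<alpha> \<beta> (Inl -` (eps_nbhd dl Z F e)) + e)}"
        by (rule bdd_belowI[where m=0]) (blast intro: less_imp_le)
      have "M_meas \<alpha> \<beta> (Inl -` F) \<le> M_meas \<alpha> \<gamma> (Inr -` (eps_nbhd dl Z F e)) + e \<and>
        M_meas \<alpha> \<gamma> (Inr -` F) \<le> M_meas \<alpha> \<beta> (Inl -` (eps_nbhd dl Z F e)) + e" if F: "F \<subseteq> Z" for F
      proof
        have "M_meas \<alpha> \<beta> (Inl -` F) \<le> M_meas \<alpha> \<gamma> (Inr -` (eps_nbhd dl Z F e))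
               + (S + ip_mass \<beta> - (\<Sum>p\<leftarrow>C. Leb (fst p)))"
          unfolding M_meas_def S_def
        proof (rule mass_bound[OF ipb ipg cd(3) cd(1) cd(2)], intro ballI impI)
          fix p assume p: "p \<in> set C" and inF: "div_block \<alpha> \<beta> (fst p) \<in> Inl -` F"
          have sp: "snd p \<in> \<gamma>" using p cd(3) by auto
          have "Inr (div_block \<alpha> \<gamma> (snd p)) \<in> Z"
            using bg(1)[OF sp] bg(2)[OF sp] unfolding Z_def Y_def Dg_def by auto
          moreover have "dl (Inr (div_block \<alpha> \<gamma> (snd p))) (Inl (div_block \<alpha> \<beta> (fst p))) < e"
            using dsp[OF p] by (simp add: abs_minus_commute)
          ultimately show "div_block \<alpha> \<gamma> (snd p) \<in> Inr -` eps_nbhd dl Z F e"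
            using inF unfolding eps_nbhd_def vimage_def mem_Collect_eq by blast
        qed
        then show "M_meas \<alpha> \<beta> (Inl -` F) \<le> M_meas \<alpha> \<gamma> (Inr -` (eps_nbhd dl Z F e)) + e"
          using c1 by linarith
      next
        define C' where "C' = map prod.swap C"
        have C'1: "set C' \<subseteq> \<gamma> \<times> \<beta>" using cd(3) by (auto simp: C'_def)
        have C'2: "distinct (map fst C')" "distinct (map snd C')" using cd(1,2) by (simp_all add: C'_def o_def)
        have "M_meas \<alpha> \<gamma> (Inr -` F) \<le> M_meas \<alpha> \<beta> (Inl -` (eps_nbhd dl Z F e))
               + ((\<Sum>p\<leftarrow>C'. \<bar>Leb (fst p) - Leb (snd p)\<bar>) + ip_mass \<gamma> - (\<Sum>p\<leftarrow>C'. Leb (fst p)))"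
          unfolding M_meas_def
        proof (rule mass_bound[OF ipg ipb C'1 C'2], intro ballI impI)
          fix q assume q: "q \<in> set C'" and inF: "div_block \<alpha> \<gamma> (fst q) \<in> Inr -` F"
          obtain p where p: "p \<in> set C" "q = prod.swap p" using q by (auto simp: C'_def)
          have sp: "fst p \<in> \<beta>" using p cd(3) by auto
          have "Inl (div_block \<alpha> \<beta> (fst p)) \<in> Z"
            using bb(1)[OF sp] bb(2)[OF sp] unfolding Z_def X_def Db_def by auto
          moreover have "dl (Inl (div_block \<alpha> \<beta> (fst p))) (Inr (div_block \<alpha> \<gamma> (snd p))) < e"
            using dsp[OF p(1)] by simp
          moreover have "Inr (div_block \<alpha> \<gamma> (snd p)) \<in> F" using inF p(2) by simp
          moreover have sq: "snd q = fst p" using p(2) by simp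
          ultimately show "div_block \<alpha> \<beta> (snd q) \<in> Inl -` eps_nbhd dl Z F e"
            unfolding eps_nbhd_def vimage_def mem_Collect_eq by metis
        qed
        moreover have "(\<Sum>p\<leftarrow>C'. \<bar>Leb (fst p) - Leb (snd p)\<bar>) = S"
          unfolding C'_def S_def by (simp add: o_def abs_minus_commute)
        moreover have "(\<Sum>p\<leftarrow>C'. Leb (fst p)) = (\<Sum>p\<leftarrow>C. Leb (snd p))"
          unfolding C'_def by (simp add: o_def)
        ultimately show "M_meas \<alpha> \<gamma> (Inr -` F) \<le> M_meas \<alpha> \<beta> (Inl -` (eps_nbhd dl Z F e)) + e"
          using c2 by linarith
      qed
      then show "e \<in> {e. e > 0 \<and> (\<forall>F\<subseteq>Z.
        M_meas \<alpha> \<beta> (Inl -` F) \<le> M_meas \<alpha> \<gamma> (Inr -` (eps_nbhd dl Z F e)) + e \<and>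
        M_meas \<alpha> \<gamma> (Inr -` F) \<le> M_meas \<alpha> \<beta> (Inl -` (eps_nbhd dl Z F e)) + e)}"
        using e0 by blast
    qed
    have "ghp X 0 (M_meas \<alpha> \<beta>) Y 0 (M_meas \<alpha> \<gamma>) \<le> max (dl (Inl 0) (Inr 0)) (max (hausdorff_in dl (Inl ` X) (Inr ` Y))
             (prokhorov_in dl Z (\<lambda>F. M_meas \<alpha> \<beta> (Inl -` F)) (\<lambda>F. M_meas \<alpha> \<gamma> (Inr -` F))))"
      unfolding ghp_def Z_def
    proof (rule cInf_lower)
      show "max (dl (Inl 0) (Inr 0)) (max (hausdorff_in dl (Inl ` X) (Inr ` Y))
             (prokhorov_in dl (Inl ` X \<union> Inr ` Y) (\<lambda>F. M_meas \<alpha> \<beta> (Inl -` F)) (\<lambda>F. M_meas \<alpha> \<gamma> (Inr -` F))))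
        \<in> {max (\<delta> (Inl 0) (Inr 0))
        (max (hausdorff_in \<delta> (Inl ` X) (Inr ` Y))
             (prokhorov_in \<delta> (Inl ` X \<union> Inr ` Y) (\<lambda>F. M_meas \<alpha> \<beta> (Inl -` F)) (\<lambda>F. M_meas \<alpha> \<gamma> (Inr -` F)))) | \<delta>.
        admissible X Y \<delta>}" using dl_adm by blast
      show "bdd_below {max (\<delta> (Inl 0) (Inr 0))
        (max (hausdorff_in \<delta> (Inl ` X) (Inr ` Y))
             (prokhorov_in \<delta> (Inl ` X \<union> Inr ` Y) (\<lambda>F. M_meas \<alpha> \<beta> (Inl -` F)) (\<lambda>F. M_meas \<alpha> \<gamma> (Inr -` F)))) | \<delta>.
        admissible X Y \<delta>}"
      proof (rule bdd_belowI[where m=0], clarify)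
        fix \<delta> assume "admissible X Y \<delta>"
        then have "0 \<le> \<delta> (Inl 0) (Inr 0)" using X0 Y0 unfolding admissible_def Let_def by blast
        then show "0 \<le> max (\<delta> (Inl 0) (Inr 0))
        (max (hausdorff_in \<delta> (Inl ` X) (Inr ` Y))
             (prokhorov_in \<delta> (Inl ` X \<union> Inr ` Y) (\<lambda>F. M_meas \<alpha> \<beta> (Inl -` F)) (\<lambda>F. M_meas \<alpha> \<gamma> (Inr -` F))))"
          by simp
      qed
    qed
    also have "\<dots> \<le> e" using H P e0 by simp
    finally show "dist_T \<alpha> \<beta> \<gamma> < \<epsilon>"
      unfolding dist_T_def X_def Y_def Db_def Dg_def e_def using \<epsilon> by simp
  qed
qed


end
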